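(* Let $n\ge 2$ and $1\le k<n$, and let $G=H_B(n,k)$. Then: (i) every vertex of $V_1$ has degree $d_{V_1}(k)=\sum_{s=1}^{k}2^{s-1}\binom{k}{s}-1+\sum_{t=1}^{n-k}2^{k+t-1}\binom{n-k}{t}=\frac{3^k-3}{2}+2^{k-1}(3^{n-k}-1)$, and there are $\binom{n}{k}$ such vertices; (ii) for $1\le r<k$, every $r$-vertex of $V_2$ has degree $\binom{n-r}{k-r}$, and there are $2^{r-1}\binom{n}{r}$ such vertices; (iii) every $k$-vertex of $V_2$ has degree $1$, and there are $(2^{k-1}-1)\binom{n}{k}$ such vertices; (iv) for $k<r\le n$, every $r$-vertex of $V_2$ has degree $\binom{r}{k}$, and there are $2^{r-1}\binom{n}{r}$ such vertices. Consequently the degree sequence of $G$ is obtained by arranging these degrees, each repeated with the stated multiplicity, in non-increasing order.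
   Context: Fix integers $n\ge 2$ and $1\le k<n$ and positive real numbers $x_1<x_2<\dots<x_n$. Let $\mathscr{B}_n=\{\pm x_1,\pm x_2,\dots,\pm x_{n-1},x_n\}$ (so $-x_n\notin\mathscr{B}_n$). Let $\phi(\mathscr{B}_n)$ be the family of all nonempty subsets $S\subseteq\mathscr{B}_n$ whose elements have pairwise distinct absolute values and whose element of largest absolute value is positive. Let $\mathscr{B}_n^+=\{x_1,\dots,x_n\}$, let $V_1$ be the set of all $k$-element subsets of $\mathscr{B}_n^+$, and let $V_2=\phi(\mathscr{B}_n)\setminus V_1$. For $A\in\phi(\mathscr{B}_n)$ put $A^\dagger=\{|a|:a\in A\}$. The bipartite Kneser B type-$k$ graph $H_B(n,k)$ is the simple graph with vertex set $V_1\cup V_2$ in which $X\in V_1$ and $Y\in V_2$ are adjacent if and only if $X\subseteq Y^\dagger$ or $Y^\dagger\subseteq X$, and there are no other edges. An $r$-vertex is a vertex having exactly $r$ elements. *)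

theory Defs
  imports Complex_Main "HOL-Library.Multiset"
begin

definition Bset :: "(nat \<Rightarrow> real) \<Rightarrow> nat \<Rightarrow> real set" where
  "Bset x n = {x i | i. 1 \<le> i \<and> i \<le> n} \<union> {- x i | i. 1 \<le> i \<and> i < n}"

definition Bpos :: "(nat \<Rightarrow> real) \<Rightarrow> nat \<Rightarrow> real set" where
  "Bpos x n = {x i | i. 1 \<le> i \<and> i \<le> n}"

definition phiB :: "(nat \<Rightarrow> real) \<Rightarrow> nat \<Rightarrow> real set set" where
  "phiB x n = {S. S \<noteq> {} \<and> S \<subseteq> Bset x n \<and> inj_on abs S \<and>
                 (\<forall>a\<in>S. (\<forall>b\<in>S. \<bar>b\<bar> \<le> \<bar>a\<bar>) \<longrightarrow> a > 0)}"

definition V1 :: "(nat \<Rightarrow> real) \<Rightarrow> nat \<Rightarrow> nat \<Rightarrow> real set set" where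
  "V1 x n k = {X. X \<subseteq> Bpos x n \<and> card X = k}"

definition V2 :: "(nat \<Rightarrow> real) \<Rightarrow> nat \<Rightarrow> nat \<Rightarrow> real set set" where
  "V2 x n k = phiB x n - V1 x n k"

definition dagger :: "real set \<Rightarrow> real set" where
  "dagger A = abs ` A"

definition HBverts :: "(nat \<Rightarrow> real) \<Rightarrow> nat \<Rightarrow> nat \<Rightarrow> real set set" where
  "HBverts x n k = V1 x n k \<union> V2 x n k"

definition HBadj :: "(nat \<Rightarrow> real) \<Rightarrow> nat \<Rightarrow> nat \<Rightarrow> real set \<Rightarrow> real set \<Rightarrow> bool" where
  "HBadj x n k A B \<longleftrightarrow>
     (A \<in> V1 x n k \<and> B \<in> V2 x n k \<and> (A \<subseteq> dagger B \<or> dagger B \<subseteq> A)) \<or>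
     (B \<in> V1 x n k \<and> A \<in> V2 x n k \<and> (B \<subseteq> dagger A \<or> dagger A \<subseteq> B))"

definition HBdeg :: "(nat \<Rightarrow> real) \<Rightarrow> nat \<Rightarrow> nat \<Rightarrow> real set \<Rightarrow> nat" where
  "HBdeg x n k A = card {B \<in> HBverts x n k. HBadj x n k A B}"

definition dV1 :: "nat \<Rightarrow> nat \<Rightarrow> nat" where
  "dV1 n k = (\<Sum>s=1..k. 2^(s-1) * (k choose s)) - 1
             + (\<Sum>t=1..n-k. 2^(k+t-1) * ((n-k) choose t))"

end

theory Submission
  imports Defs
begin


lemma sum3: "2 * (\<Sum>s=1..m. 2^(s-1) * (m choose s)) + 1 = (3::nat)^m"
proof -
  have "(3::nat)^m = (2+1)^m" by simp
  also have "\<dots> = (\<Sum>s\<le>m. (m choose s) * 2^s)"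
    by (subst binomial_ring) simp
  also have "\<dots> = (\<Sum>s\<in>insert 0 {1..m}. (m choose s) * 2^s)"
    by (rule sum.cong) auto
  also have "\<dots> = 1 + (\<Sum>s=1..m. (m choose s) * 2^s)" by simp
  also have "(\<Sum>s=1..m. (m choose s) * 2^s) = 2 * (\<Sum>s=1..m. 2^(s-1) * (m choose s))"
    unfolding sum_distrib_left
    by (rule sum.cong) (auto simp: power_eq_if)
  finally show ?thesis by simp
qed

lemma dV1_closed: assumes "1 \<le> k" "k < n"
  shows "dV1 n k = (3^k - 3) div 2 + 2^(k-1) * (3^(n-k) - 1)"
proof -
  have a: "2 * (\<Sum>s=1..k. 2^(s-1) * (k choose s)) + 1 = (3::nat)^k" by (rule sum3)
  have b: "2 * (\<Sum>t=1..n-k. 2^(t-1) * ((n-k) choose t)) + 1 = (3::nat)^(n-k)" by (rule sum3)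
  have c: "(\<Sum>t=1..n-k. 2^(k+t-1) * ((n-k) choose t)) = 2^k * (\<Sum>t=1..n-k. 2^(t-1) * ((n-k) choose t))"
    unfolding sum_distrib_left
    by (rule sum.cong) (auto simp: power_add[symmetric] mult.assoc)
  have d: "(2::nat)^k = 2 * 2^(k-1)" using assms by (cases k) auto
  have e: "(\<Sum>s=1..k. 2^(s-1) * (k choose s)) \<ge> 1"
  proof -
    have "(\<Sum>s=1..k. 2^(s-1) * (k choose s)) \<ge> 2^(1-1) * (k choose 1)"
      by (rule member_le_sum) (use assms in auto)
    thus ?thesis using assms by simp
  qed
  define A where "A = (\<Sum>s=1..k. 2^(s-1) * (k choose s))"
  define B where "B = (\<Sum>t=1..n-k. 2^(t-1) * ((n-k) choose t))"
  define p where "p = (2::nat)^(k-1)"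
  have "dV1 n k = A - 1 + 2 * p * B" unfolding dV1_def c A_def B_def p_def using d by simp
  moreover have "(3::nat)^k - 3 = 2 * (A - 1)" using a e unfolding A_def by simp
  moreover have "(3::nat)^(n-k) - 1 = 2 * B" using b unfolding B_def by simp
  ultimately show ?thesis unfolding p_def by simp
qed



lemma group_card:
  assumes "finite A"
  shows "(\<Sum>T\<in>{T. T \<subseteq> A \<and> T \<noteq> {}}. g (card T)) = (\<Sum>s=1..card A. (card A choose s) * g s)"
proof -
  have fin: "finite {T. T \<subseteq> A \<and> T \<noteq> {}}" using assms by simp
  have img: "card ` {T. T \<subseteq> A \<and> T \<noteq> {}} \<subseteq> {1..card A}"
    using assms by (auto simp: card_mono Suc_le_eq card_gt_0_iff dest: finite_subset)
  have "(\<Sum>T\<in>{T. T \<subseteq> A \<and> T \<noteq> {}}. g (card T))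
      = (\<Sum>s=1..card A. \<Sum>T\<in>{T. T \<in> {T. T \<subseteq> A \<and> T \<noteq> {}} \<and> card T = s}. g (card T))"
    by (rule sum.group[OF fin _ img, symmetric]) simp
  also have "\<dots> = (\<Sum>s=1..card A. (card A choose s) * g s)"
  proof (rule sum.cong[OF refl])
    fix s assume s: "s \<in> {1..card A}"
    have eq: "{T. T \<in> {T. T \<subseteq> A \<and> T \<noteq> {}} \<and> card T = s} = {T. T \<subseteq> A \<and> card T = s}"
      using s by auto
    show "(\<Sum>T\<in>{T. T \<in> {T. T \<subseteq> A \<and> T \<noteq> {}} \<and> card T = s}. g (card T)) = (card A choose s) * g s"
      unfolding eq using n_subsets[OF assms, of s] by simp
  qed
  finally show ?thesis .
qed

locale kb =
  fixes P :: "real set"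
  assumes finP: "finite P" and posP: "\<And>p. p \<in> P \<Longrightarrow> p > 0"
begin

definition phi :: "real set set" where
  "phi = {S. S \<noteq> {} \<and> S \<subseteq> P \<union> uminus ` (P - {Max P}) \<and> inj_on abs S \<and>
                 (\<forall>a\<in>S. (\<forall>b\<in>S. \<bar>b\<bar> \<le> \<bar>a\<bar>) \<longrightarrow> a > 0)}"

lemma phi_sub: "S \<in> phi \<Longrightarrow> abs ` S \<subseteq> P"
proof
  fix a assume "a \<in> abs ` S" and S: "S \<in> phi"
  then obtain b where b: "b \<in> S" "a = \<bar>b\<bar>" by auto
  have "b \<in> P \<or> -b \<in> P" using S b unfolding phi_def by auto
  thus "a \<in> P" using posP b by (metis abs_of_pos abs_minus_cancel)
qed

lemma phi_fin: "S \<in> phi \<Longrightarrow> finite S"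
  unfolding phi_def using finP by (auto intro: finite_subset)

lemma phi_card: "S \<in> phi \<Longrightarrow> card (abs ` S) = card S"
  unfolding phi_def by (simp add: card_image)

lemma phi_ne: "S \<in> phi \<Longrightarrow> abs ` S \<noteq> {}"
  unfolding phi_def by auto

definition mk :: "real set \<Rightarrow> real set \<Rightarrow> real set" where
  "mk T N = (T - N) \<union> uminus ` N"

lemma mk_inj: assumes "T \<subseteq> P" shows "inj_on (mk T) (Pow T)"
proof (rule inj_onI)
  fix N M assume N: "N \<in> Pow T" and M: "M \<in> Pow T" and e: "mk T N = mk T M"
  have r: "uminus ` {a \<in> mk T L. a < 0} = L" if "L \<subseteq> T" for L
  proof -
    have "{a \<in> mk T L. a < 0} = uminus ` L"
    proof
      show "{a \<in> mk T L. a < 0} \<subseteq> uminus ` L"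
      proof
        fix a assume a: "a \<in> {a \<in> mk T L. a < 0}"
        hence "a \<in> T - L \<or> a \<in> uminus ` L" unfolding mk_def by blast
        moreover have "a \<notin> T" using a assms posP by (metis (no_types, lifting) mem_Collect_eq not_less_iff_gr_or_eq subsetD)
        ultimately show "a \<in> uminus ` L" by blast
      qed
      show "uminus ` L \<subseteq> {a \<in> mk T L. a < 0}"
      proof
        fix a assume "a \<in> uminus ` L"
        then obtain l where l: "l \<in> L" "a = -l" by auto
        have "l > 0" using l that assms posP by blast
        thus "a \<in> {a \<in> mk T L. a < 0}" using l unfolding mk_def by auto
      qed
    qed
    thus ?thesis by (simp add: image_image)
  qed
  have "N = uminus ` {a \<in> mk T N. a < 0}" using r[of N] N by simp
  also have "\<dots> = uminus ` {a \<in> mk T M. a < 0}" using e by simp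
  also have "\<dots> = M" using r[of M] M by simp
  finally show "N = M" .
qed

lemma fiber_eq:
  assumes T: "T \<subseteq> P" "T \<noteq> {}"
  shows "{S\<in>phi. abs ` S = T} = mk T ` Pow (T - {Max T})"
proof -
  have finT: "finite T" using T finP by (auto intro: finite_subset)
  have MT: "Max T \<in> T" using finT T by simp
  have MTle: "\<And>t. t \<in> T \<Longrightarrow> t \<le> Max T" using finT by simp
  have posT: "\<And>t. t \<in> T \<Longrightarrow> t > 0" using T posP by auto
  have MP: "Max P \<in> T \<Longrightarrow> Max T = Max P"
    using T finP MTle by (meson Max_ge antisym subsetD MT)
  show ?thesis
  proof
    show "{S\<in>phi. abs ` S = T} \<subseteq> mk T ` Pow (T - {Max T})"
    proof
      fix S assume "S \<in> {S\<in>phi. abs ` S = T}"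
      hence S: "S \<in> phi" "abs ` S = T" by auto
      have inj: "inj_on abs S" using S unfolding phi_def by auto
      have mx: "\<And>a. a \<in> S \<Longrightarrow> (\<forall>b\<in>S. \<bar>b\<bar> \<le> \<bar>a\<bar>) \<Longrightarrow> a > 0"
        using S unfolding phi_def by auto
      define N where "N = {t \<in> T. - t \<in> S}"
      have notboth: "\<And>t. t \<in> S \<Longrightarrow> -t \<in> S \<Longrightarrow> t = 0"
      proof -
        fix t assume "t \<in> S" "-t \<in> S"
        hence "t = -t" using inj unfolding inj_on_def by (metis abs_minus_cancel)
        thus "t = 0" by simp
      qed
      have nz: "\<And>a. a \<in> S \<Longrightarrow> a \<noteq> 0" using S posT by force
      have "S = mk T N"
      proof
        show "S \<subseteq> mk T N"
        proof
          fix a assume a: "a \<in> S"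
          have aT: "\<bar>a\<bar> \<in> T" using S a by auto
          show "a \<in> mk T N"
          proof (cases "a > 0")
            case True
            hence "a \<in> T" using aT by simp
            moreover have "a \<notin> N" using notboth a nz N_def by auto
            ultimately show ?thesis unfolding mk_def by auto
          next
            case False
            hence "a = - \<bar>a\<bar>" by simp
            hence "\<bar>a\<bar> \<in> N" using a aT N_def by (metis (mono_tags, lifting) mem_Collect_eq minus_minus)
            thus ?thesis unfolding mk_def using \<open>a = - \<bar>a\<bar>\<close> by (metis UnI2 image_eqI)
          qed
        qed
      next
        show "mk T N \<subseteq> S"
        proof
          fix a assume "a \<in> mk T N"
          then consider "a \<in> T" "a \<notin> N" | t where "t \<in> N" "a = -t" unfolding mk_def by auto
          thus "a \<in> S"
          proof cases
            case 1
            then obtain b where b: "b \<in> S" "\<bar>b\<bar> = a" using S by auto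
            have "b = a \<or> b = -a" using b by auto
            thus ?thesis using b 1 N_def by auto
          next
            case 2 thus ?thesis using N_def by auto
          qed
        qed
      qed
      moreover have "N \<subseteq> T - {Max T}"
      proof
        fix t assume t: "t \<in> N"
        show "t \<in> T - {Max T}"
        proof
          show "t \<in> T" using t N_def by auto
          show "t \<notin> {Max T}"
          proof
            assume "t \<in> {Max T}"
            hence tm: "t = Max T" by simp
            have "-t \<in> S" using t N_def by auto
            moreover have "\<forall>b\<in>S. \<bar>b\<bar> \<le> \<bar>-t\<bar>" using S MTle tm posT MT by force
            ultimately have "-t > 0" using mx by blast
            thus False using posT MT tm by force
          qed
        qed
      qed
      ultimately show "S \<in> mk T ` Pow (T - {Max T})" by blast
    qed
  next
    show "mk T ` Pow (T - {Max T}) \<subseteq> {S\<in>phi. abs ` S = T}"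
    proof
      fix S assume "S \<in> mk T ` Pow (T - {Max T})"
      then obtain N where N: "N \<subseteq> T - {Max T}" and SN: "S = mk T N" by auto
      have absS: "abs ` S = T"
      proof
        show "abs ` S \<subseteq> T" using SN N posT unfolding mk_def by force
        show "T \<subseteq> abs ` S"
        proof
          fix t assume t: "t \<in> T"
          show "t \<in> abs ` S"
          proof (cases "t \<in> N")
            case True
            hence "-t \<in> S" using SN mk_def by auto
            thus ?thesis using posT[OF t] by (metis abs_minus_cancel abs_of_pos image_eqI)
          next
            case False
            hence "t \<in> S" using SN mk_def t by auto
            thus ?thesis using posT[OF t] by (metis abs_of_pos image_eqI)
          qed
        qed
      qed
      have MTS: "Max T \<in> S" using N MT SN mk_def by auto
      have "S \<in> phi" unfolding phi_def
      proof (intro CollectI conjI)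
        show "S \<noteq> {}" using MTS by auto
        show "S \<subseteq> P \<union> uminus ` (P - {Max P})"
        proof
          fix a assume "a \<in> S"
          then consider "a \<in> T" | t where "t \<in> N" "a = -t" using SN mk_def by auto
          thus "a \<in> P \<union> uminus ` (P - {Max P})"
          proof cases
            case 1 thus ?thesis using T by auto
          next
            case 2
            have "t \<noteq> Max P" using 2 N MP by auto
            thus ?thesis using 2 N T by auto
          qed
        qed
        show "inj_on abs S"
        proof (rule inj_onI)
          fix a b assume a: "a \<in> S" and b: "b \<in> S" and e: "\<bar>a\<bar> = \<bar>b\<bar>"
          have sa: "(a \<in> T \<and> a \<notin> N) \<or> (-a \<in> N)" using a SN mk_def by auto
          have sb: "(b \<in> T \<and> b \<notin> N) \<or> (-b \<in> N)" using b SN mk_def by auto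
          have "a = b \<or> a = -b" using e by (auto simp: abs_if split: if_splits)
          moreover { assume ab: "a = -b" "a \<noteq> b"
            have NT: "N \<subseteq> T" using N by auto
            have b': "(-a \<in> T \<and> -a \<notin> N) \<or> (a \<in> N)" using sb ab by simp
            have p1: "a \<in> T \<Longrightarrow> a > 0" "-a \<in> T \<Longrightarrow> -a > 0" using posT by blast+
            have c: "a \<in> T \<and> -a \<in> T" using sa b' NT by blast
            have False using p1 c by force
          }
          ultimately show "a = b" by blast
        qed
        show "\<forall>a\<in>S. (\<forall>b\<in>S. \<bar>b\<bar> \<le> \<bar>a\<bar>) \<longrightarrow> a > 0"
        proof (intro ballI impI)
          fix a assume a: "a \<in> S" and h: "\<forall>b\<in>S. \<bar>b\<bar> \<le> \<bar>a\<bar>"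
          have aT: "\<bar>a\<bar> \<in> T" using a absS by auto
          have MTpos: "Max T > 0" using posT MT by blast
          have hM: "\<bar>Max T\<bar> \<le> \<bar>a\<bar>" using h MTS by blast
          have le1: "Max T \<le> \<bar>a\<bar>" using hM MTpos by simp
          have le2: "\<bar>a\<bar> \<le> Max T" using MTle aT by blast
          have e1: "\<bar>a\<bar> = Max T" using le1 le2 by linarith
          have NM: "Max T \<notin> N" using N by auto
          have e2: "-Max T \<notin> S"
          proof
            assume m: "-Max T \<in> S"
            have d: "-Max T \<in> T - N \<or> -Max T \<in> uminus ` N" using m SN unfolding mk_def by blast
            have n1: "-Max T \<notin> T"
            proof
              assume "-Max T \<in> T"
              hence "-Max T > 0" by (rule posT)
              thus False using MTpos by simp
            qed
            have n2: "-Max T \<notin> uminus ` N" using NM by auto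
            show False using d n1 n2 by blast
          qed
          show "a > 0"
          proof (rule ccontr)
            assume "\<not> a > 0"
            hence "\<bar>a\<bar> = -a" by simp
            hence "a = - Max T" using e1 by simp
            thus False using e2 a by simp
          qed
        qed
      qed
      thus "S \<in> {S\<in>phi. abs ` S = T}" using absS by auto
    qed
  qed
qed

lemma fiber_card:
  assumes T: "T \<subseteq> P" "T \<noteq> {}"
  shows "card {S\<in>phi. abs ` S = T} = 2^(card T - 1)"
proof -
  have finT: "finite T" using T finP by (auto intro: finite_subset)
  have "card {S\<in>phi. abs ` S = T} = card (Pow (T - {Max T}))"
    unfolding fiber_eq[OF T]
    by (rule card_image, rule inj_on_subset[OF mk_inj[OF T(1)]]) auto
  also have "\<dots> = 2^(card T - 1)" using finT T by (simp add: card_Pow)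
  finally show ?thesis .
qed

lemma count_phi:
  "card {S\<in>phi. Q (abs ` S)} = (\<Sum>T\<in>{T. T \<subseteq> P \<and> T \<noteq> {} \<and> Q T}. 2^(card T - 1))"
proof -
  have eq: "{S\<in>phi. Q (abs ` S)} = (\<Union>T\<in>{T. T \<subseteq> P \<and> T \<noteq> {} \<and> Q T}. {S\<in>phi. abs ` S = T})"
    using phi_sub phi_ne by auto
  have "card (\<Union>T\<in>{T. T \<subseteq> P \<and> T \<noteq> {} \<and> Q T}. {S\<in>phi. abs ` S = T})
      = (\<Sum>T\<in>{T. T \<subseteq> P \<and> T \<noteq> {} \<and> Q T}. card {S\<in>phi. abs ` S = T})"
  proof (rule card_UN_disjoint)
    show "finite {T. T \<subseteq> P \<and> T \<noteq> {} \<and> Q T}" using finP by simp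
    show "\<forall>T\<in>{T. T \<subseteq> P \<and> T \<noteq> {} \<and> Q T}. finite {S\<in>phi. abs ` S = T}"
    proof
      fix T
      have "{S\<in>phi. abs ` S = T} \<subseteq> Pow (P \<union> uminus ` (P - {Max P}))" unfolding phi_def by auto
      thus "finite {S\<in>phi. abs ` S = T}" using finP by (auto intro: finite_subset)
    qed
    show "\<forall>i\<in>{T. T \<subseteq> P \<and> T \<noteq> {} \<and> Q T}. \<forall>j\<in>{T. T \<subseteq> P \<and> T \<noteq> {} \<and> Q T}. i \<noteq> j \<longrightarrow>
        {S \<in> phi. abs ` S = i} \<inter> {S \<in> phi. abs ` S = j} = {}" by auto
  qed
  also have "\<dots> = (\<Sum>T\<in>{T. T \<subseteq> P \<and> T \<noteq> {} \<and> Q T}. 2^(card T - 1))"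
    by (rule sum.cong) (auto simp: fiber_card)
  finally show ?thesis using eq by simp
qed

end



locale kb2 = kb +
  fixes k :: nat
  assumes k1: "1 \<le> k" and kn: "k < card P"
begin

definition "W1 = {X. X \<subseteq> P \<and> card X = k}"
definition "W2 = phi - W1"
definition "adj A B \<longleftrightarrow>
     (A \<in> W1 \<and> B \<in> W2 \<and> (A \<subseteq> abs ` B \<or> abs ` B \<subseteq> A)) \<or>
     (B \<in> W1 \<and> A \<in> W2 \<and> (B \<subseteq> abs ` A \<or> abs ` A \<subseteq> B))"
definition "deg A = card {B \<in> W1 \<union> W2. adj A B}"

lemma absP: "X \<subseteq> P \<Longrightarrow> abs ` X = X"
proof -
  assume X: "X \<subseteq> P"
  have px: "\<forall>x\<in>X. x > 0" using X posP by blast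
  have "abs ` X = id ` X" by (rule image_cong) (use px in auto)
  thus ?thesis by simp
qed

lemma W1_phi: "W1 \<subseteq> phi"
proof
  fix X assume "X \<in> W1"
  hence X: "X \<subseteq> P" "card X = k" unfolding W1_def by auto
  show "X \<in> phi" unfolding phi_def
  proof (intro CollectI conjI)
    show "X \<noteq> {}" using X k1 by auto
    show "X \<subseteq> P \<union> uminus ` (P - {Max P})" using X by auto
    have px: "\<forall>x\<in>X. x > 0" using X posP by blast
    show "inj_on abs X"
    proof (rule inj_onI)
      fix a b assume "a \<in> X" "b \<in> X" "\<bar>a\<bar> = \<bar>b\<bar>"
      thus "a = b" using px by (metis abs_of_pos)
    qed
    show "\<forall>a\<in>X. (\<forall>b\<in>X. \<bar>b\<bar> \<le> \<bar>a\<bar>) \<longrightarrow> 0 < a" using X posP by blast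
  qed
qed

lemma phi_finite: "finite phi"
proof -
  have "phi \<subseteq> Pow (P \<union> uminus ` (P - {Max P}))" unfolding phi_def by auto
  thus ?thesis using finP by (auto intro: finite_subset)
qed

lemma phi_card_le: "S \<in> phi \<Longrightarrow> card S \<le> card P"
proof -
  assume S: "S \<in> phi"
  have "card (abs ` S) \<le> card P" by (rule card_mono[OF finP phi_sub[OF S]])
  thus ?thesis using phi_card[OF S] by simp
qed

lemma phi_card_ge: "S \<in> phi \<Longrightarrow> 1 \<le> card S"
proof -
  assume S: "S \<in> phi"
  have "S \<noteq> {}" using S unfolding phi_def by blast
  hence "card S > 0" using phi_fin[OF S] by (simp add: card_gt_0_iff)
  thus ?thesis by simp
qed

lemma deg_W1:
  assumes X: "X \<in> W1"
  shows "deg X = dV1 (card P) k"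
proof -
  have XP: "X \<subseteq> P" and cX: "card X = k" using X unfolding W1_def by auto
  have finX: "finite X" by (rule finite_subset[OF XP finP])
  define Q where "Q T \<longleftrightarrow> X \<subseteq> T \<or> T \<subseteq> X" for T
  have nb: "{B \<in> W1 \<union> W2. adj X B} = {S\<in>phi. Q (abs ` S)} - {X}"
  proof
    show "{B \<in> W1 \<union> W2. adj X B} \<subseteq> {S\<in>phi. Q (abs ` S)} - {X}"
    proof
      fix B assume "B \<in> {B \<in> W1 \<union> W2. adj X B}"
      hence B: "adj X B" by auto
      have XW2: "X \<notin> W2" using X W2_def by auto
      hence "B \<in> W2" "X \<subseteq> abs ` B \<or> abs ` B \<subseteq> X" using B unfolding adj_def by auto
      thus "B \<in> {S\<in>phi. Q (abs ` S)} - {X}" using X unfolding W2_def Q_def by auto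
    qed
    show "{S\<in>phi. Q (abs ` S)} - {X} \<subseteq> {B \<in> W1 \<union> W2. adj X B}"
    proof
      fix B assume "B \<in> {S\<in>phi. Q (abs ` S)} - {X}"
      hence B: "B \<in> phi" "Q (abs ` B)" "B \<noteq> X" by auto
      have "B \<notin> W1"
      proof
        assume "B \<in> W1"
        hence BP: "B \<subseteq> P" and cB: "card B = k" unfolding W1_def by auto
        have finB: "finite B" using BP finP by (auto intro: finite_subset)
        have "X \<subseteq> B \<or> B \<subseteq> X" using B(2) absP[OF BP] Q_def by simp
        hence "B = X" using card_subset_eq finB finX cB cX by metis
        thus False using B by simp
      qed
      hence "B \<in> W2" using B W2_def by auto
      thus "B \<in> {B \<in> W1 \<union> W2. adj X B}" using X B(2) unfolding adj_def Q_def by auto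
    qed
  qed
  have Xin: "X \<in> {S\<in>phi. Q (abs ` S)}" using X W1_phi absP[OF XP] Q_def by auto
  have finS: "finite {S\<in>phi. Q (abs ` S)}" using phi_finite by simp
  have d1: "deg X = card {S\<in>phi. Q (abs ` S)} - 1"
    unfolding deg_def nb using Xin finS by simp
  define A1 where "A1 = {T. T \<subseteq> X \<and> T \<noteq> {}}"
  define A2 where "A2 = (\<lambda>U. X \<union> U) ` {U. U \<subseteq> P - X \<and> U \<noteq> {}}"
  have split: "{T. T \<subseteq> P \<and> T \<noteq> {} \<and> Q T} = A1 \<union> A2"
  proof
    show "{T. T \<subseteq> P \<and> T \<noteq> {} \<and> Q T} \<subseteq> A1 \<union> A2"
    proof
      fix T assume "T \<in> {T. T \<subseteq> P \<and> T \<noteq> {} \<and> Q T}"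
      hence T: "T \<subseteq> P" "T \<noteq> {}" "Q T" by auto
      show "T \<in> A1 \<union> A2"
      proof (cases "T \<subseteq> X")
        case True thus ?thesis using T A1_def by auto
      next
        case False
        hence "X \<subseteq> T" using T(3) Q_def by auto
        hence "T = X \<union> (T - X)" "T - X \<subseteq> P - X" "T - X \<noteq> {}" using T False by auto
        thus ?thesis unfolding A2_def by blast
      qed
    qed
    show "A1 \<union> A2 \<subseteq> {T. T \<subseteq> P \<and> T \<noteq> {} \<and> Q T}"
      using XP k1 cX unfolding A1_def A2_def Q_def by auto
  qed
  have disj: "A1 \<inter> A2 = {}" unfolding A1_def A2_def by auto
  have finA1: "finite A1" using finX A1_def by simp
  have finA2: "finite A2" using finP A2_def by simp
  have injU: "inj_on (\<lambda>U. X \<union> U) {U. U \<subseteq> P - X \<and> U \<noteq> {}}"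
  proof (rule inj_onI)
    fix U V assume "U \<in> {U. U \<subseteq> P - X \<and> U \<noteq> {}}" "V \<in> {U. U \<subseteq> P - X \<and> U \<noteq> {}}"
      and e: "X \<union> U = X \<union> V"
    hence "U = (X \<union> U) - X" "V = (X \<union> V) - X" by auto
    thus "U = V" using e by simp
  qed
  have s1: "(\<Sum>T\<in>A1. (2::nat)^(card T - 1)) = (\<Sum>s=1..k. (k choose s) * 2^(s-1))"
    unfolding A1_def using group_card[OF finX, of "\<lambda>s. 2^(s-1)"] cX by simp
  have cPX: "card (P - X) = card P - k" using card_Diff_subset[OF finX XP] cX by simp
  have finPX: "finite (P - X)" using finP by simp
  have s2: "(\<Sum>T\<in>A2. (2::nat)^(card T - 1)) = (\<Sum>t=1..card P - k. ((card P - k) choose t) * 2^(k+t-1))"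
  proof -
    have "(\<Sum>T\<in>A2. (2::nat)^(card T - 1)) = (\<Sum>U\<in>{U. U \<subseteq> P - X \<and> U \<noteq> {}}. 2^(card (X \<union> U) - 1))"
      unfolding A2_def by (rule sum.reindex[OF injU, unfolded comp_def])
    also have "\<dots> = (\<Sum>U\<in>{U. U \<subseteq> P - X \<and> U \<noteq> {}}. (2::nat)^(k + card U - 1))"
    proof (rule sum.cong[OF refl])
      fix U assume "U \<in> {U. U \<subseteq> P - X \<and> U \<noteq> {}}"
      hence "U \<subseteq> P - X" by auto
      hence "card (X \<union> U) = k + card U" using cX finX finPX
        by (subst card_Un_disjoint) (auto intro: finite_subset)
      thus "(2::nat)^(card (X \<union> U) - 1) = 2^(k + card U - 1)" by simp
    qed
    also have "\<dots> = (\<Sum>t=1..card P - k. ((card P - k) choose t) * 2^(k+t-1))"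
      using group_card[OF finPX, of "\<lambda>t. 2^(k+t-1)"] cPX by simp
    finally show ?thesis .
  qed
  have cnt: "card {S\<in>phi. Q (abs ` S)} = (\<Sum>T\<in>A1. (2::nat)^(card T - 1)) + (\<Sum>T\<in>A2. 2^(card T - 1))"
    unfolding count_phi split by (rule sum.union_disjoint[OF finA1 finA2 disj])
  have ge: "(\<Sum>s=1..k. (k choose s) * 2^(s-1)) \<ge> (1::nat)"
  proof -
    have "(\<Sum>s=1..k. (k choose s) * 2^(s-1)) \<ge> (k choose 1) * 2^(1-1)"
      by (rule member_le_sum) (use k1 in auto)
    thus ?thesis using k1 by simp
  qed
  have e1: "(\<Sum>s=1..k. 2^(s-1) * (k choose s)) = (\<Sum>s=1..k. (k choose s) * 2^(s-1))"
    by (simp add: mult.commute)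
  have e2: "(\<Sum>t=1..card P - k. 2^(k+t-1) * ((card P - k) choose t)) = (\<Sum>t=1..card P - k. ((card P - k) choose t) * 2^(k+t-1))"
    by (simp add: mult.commute)
  show ?thesis unfolding d1 cnt s1 s2 dV1_def e1 e2 using ge by simp
qed

end



lemma mset_part:
  "finite I \<Longrightarrow> (\<forall>i\<in>I. finite (A i)) \<Longrightarrow> (\<forall>i\<in>I. \<forall>j\<in>I. i \<noteq> j \<longrightarrow> A i \<inter> A j = {})
   \<Longrightarrow> (\<forall>i\<in>I. \<forall>a\<in>A i. f a = c i)
   \<Longrightarrow> image_mset f (mset_set (\<Union>i\<in>I. A i)) = (\<Sum>i\<in>I. replicate_mset (card (A i)) (c i))"
proof (induction I rule: finite_induct)
  case empty
  then show ?case by simp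
next
  case (insert i I)
  have fi: "finite (A i)" using insert.prems by simp
  have fU: "finite (\<Union>j\<in>I. A j)" using insert.prems insert.hyps by simp
  have dj: "A i \<inter> (\<Union>j\<in>I. A j) = {}"
  proof -
    have "A i \<inter> A j = {}" if j: "j \<in> I" for j
    proof -
      have "i \<noteq> j" using insert.hyps(2) j by blast
      thus ?thesis using insert.prems(2) j by blast
    qed
    thus ?thesis by blast
  qed
  have IH: "image_mset f (mset_set (\<Union>j\<in>I. A j)) = (\<Sum>j\<in>I. replicate_mset (card (A j)) (c j))"
    using insert.IH insert.prems by simp
  have ci: "image_mset f (mset_set (A i)) = replicate_mset (card (A i)) (c i)"
  proof -
    have "image_mset f (mset_set (A i)) = image_mset (\<lambda>_. c i) (mset_set (A i))"
      by (rule image_mset_cong) (use insert.prems fi in auto)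
    also have "\<dots> = replicate_mset (card (A i)) (c i)" by (simp add: image_mset_const_eq)
    finally show ?thesis .
  qed
  have "(\<Union>j\<in>insert i I. A j) = A i \<union> (\<Union>j\<in>I. A j)" by simp
  hence "image_mset f (mset_set (\<Union>j\<in>insert i I. A j))
      = image_mset f (mset_set (A i)) + image_mset f (mset_set (\<Union>j\<in>I. A j))"
    using mset_set_Union[OF fi fU dj] by simp
  also have "\<dots> = (\<Sum>j\<in>insert i I. replicate_mset (card (A j)) (c j))"
    using ci IH insert.hyps by simp
  finally show ?case .
qed

context kb2 begin

lemma W2_nb: assumes Y: "Y \<in> W2"
  shows "{B \<in> W1 \<union> W2. adj Y B} = {X\<in>W1. X \<subseteq> abs ` Y \<or> abs ` Y \<subseteq> X}"
proof -
  have "Y \<notin> W1" using Y W2_def by blast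
  thus ?thesis using Y unfolding adj_def by blast
qed

lemma W2_basic: assumes Y: "Y \<in> W2"
  shows "abs ` Y \<subseteq> P" "card (abs ` Y) = card Y" "finite (abs ` Y)"
proof -
  have Yp: "Y \<in> phi" using Y W2_def by blast
  show "abs ` Y \<subseteq> P" by (rule phi_sub[OF Yp])
  show "card (abs ` Y) = card Y" by (rule phi_card[OF Yp])
  show "finite (abs ` Y)" using phi_fin[OF Yp] by simp
qed

lemma deg_small: assumes Y: "Y \<in> W2" and r: "card Y = r" "r < k"
  shows "deg Y = (card P - r) choose (k - r)"
proof -
  define D where "D = abs ` Y"
  have DP: "D \<subseteq> P" and cD: "card D = r" and finD: "finite D"
    using W2_basic[OF Y] r unfolding D_def by auto
  have finPD: "finite (P - D)" using finP by simp
  have cPD: "card (P - D) = card P - r" using card_Diff_subset[OF finD DP] cD by simp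
  have eq: "{X\<in>W1. X \<subseteq> D \<or> D \<subseteq> X} = (\<lambda>U. D \<union> U) ` {U. U \<subseteq> P - D \<and> card U = k - r}"
  proof
    show "{X\<in>W1. X \<subseteq> D \<or> D \<subseteq> X} \<subseteq> (\<lambda>U. D \<union> U) ` {U. U \<subseteq> P - D \<and> card U = k - r}"
    proof
      fix X assume "X \<in> {X\<in>W1. X \<subseteq> D \<or> D \<subseteq> X}"
      hence X: "X \<subseteq> P" "card X = k" "X \<subseteq> D \<or> D \<subseteq> X" unfolding W1_def by auto
      have finX: "finite X" by (rule finite_subset[OF X(1) finP])
      have "\<not> X \<subseteq> D"
      proof
        assume "X \<subseteq> D"
        hence "card X \<le> card D" by (rule card_mono[OF finD])
        thus False using X cD r by simp
      qed
      hence DX: "D \<subseteq> X" using X by blast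
      have "card (X - D) = k - r" using card_Diff_subset[OF finD DX] X cD by simp
      moreover have "X = D \<union> (X - D)" using DX by blast
      moreover have "X - D \<subseteq> P - D" using X by blast
      ultimately show "X \<in> (\<lambda>U. D \<union> U) ` {U. U \<subseteq> P - D \<and> card U = k - r}" by blast
    qed
    show "(\<lambda>U. D \<union> U) ` {U. U \<subseteq> P - D \<and> card U = k - r} \<subseteq> {X\<in>W1. X \<subseteq> D \<or> D \<subseteq> X}"
    proof
      fix X assume "X \<in> (\<lambda>U. D \<union> U) ` {U. U \<subseteq> P - D \<and> card U = k - r}"
      then obtain U where U: "U \<subseteq> P - D" "card U = k - r" and XU: "X = D \<union> U" by blast
      have finU: "finite U" by (rule finite_subset[OF U(1) finPD])
      have "card X = k" unfolding XU using U finU finD cD r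
        by (subst card_Un_disjoint) auto
      moreover have "X \<subseteq> P" using XU U DP by blast
      ultimately show "X \<in> {X\<in>W1. X \<subseteq> D \<or> D \<subseteq> X}" unfolding W1_def XU by blast
    qed
  qed
  have inj: "inj_on (\<lambda>U. D \<union> U) {U. U \<subseteq> P - D \<and> card U = k - r}"
  proof (rule inj_onI)
    fix U V assume "U \<in> {U. U \<subseteq> P - D \<and> card U = k - r}" "V \<in> {U. U \<subseteq> P - D \<and> card U = k - r}"
      and e: "D \<union> U = D \<union> V"
    hence "U = (D \<union> U) - D" "V = (D \<union> V) - D" by auto
    thus "U = V" using e by simp
  qed
  have "deg Y = card {X\<in>W1. X \<subseteq> D \<or> D \<subseteq> X}" unfolding deg_def W2_nb[OF Y] D_def ..
  also have "\<dots> = card {U. U \<subseteq> P - D \<and> card U = k - r}" unfolding eq by (rule card_image[OF inj])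
  also have "\<dots> = (card P - r) choose (k - r)" using n_subsets[OF finPD] cPD by simp
  finally show ?thesis .
qed

lemma deg_big: assumes Y: "Y \<in> W2" and r: "card Y = r" "k < r"
  shows "deg Y = r choose k"
proof -
  define D where "D = abs ` Y"
  have DP: "D \<subseteq> P" and cD: "card D = r" and finD: "finite D"
    using W2_basic[OF Y] r unfolding D_def by auto
  have eq: "{X\<in>W1. X \<subseteq> D \<or> D \<subseteq> X} = {X. X \<subseteq> D \<and> card X = k}"
  proof
    show "{X\<in>W1. X \<subseteq> D \<or> D \<subseteq> X} \<subseteq> {X. X \<subseteq> D \<and> card X = k}"
    proof
      fix X assume "X \<in> {X\<in>W1. X \<subseteq> D \<or> D \<subseteq> X}"
      hence X: "X \<subseteq> P" "card X = k" "X \<subseteq> D \<or> D \<subseteq> X" unfolding W1_def by auto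
      have finX: "finite X" by (rule finite_subset[OF X(1) finP])
      have "\<not> D \<subseteq> X"
      proof
        assume "D \<subseteq> X"
        hence "card D \<le> card X" by (rule card_mono[OF finX])
        thus False using X cD r by simp
      qed
      thus "X \<in> {X. X \<subseteq> D \<and> card X = k}" using X by blast
    qed
    show "{X. X \<subseteq> D \<and> card X = k} \<subseteq> {X\<in>W1. X \<subseteq> D \<or> D \<subseteq> X}"
      using DP unfolding W1_def by blast
  qed
  have "deg Y = card {X\<in>W1. X \<subseteq> D \<or> D \<subseteq> X}" unfolding deg_def W2_nb[OF Y] D_def ..
  also have "\<dots> = r choose k" unfolding eq using n_subsets[OF finD] cD by simp
  finally show ?thesis .
qed

lemma deg_eq: assumes Y: "Y \<in> W2" and r: "card Y = k"
  shows "deg Y = 1"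
proof -
  define D where "D = abs ` Y"
  have DP: "D \<subseteq> P" and cD: "card D = k" and finD: "finite D"
    using W2_basic[OF Y] r unfolding D_def by auto
  have eq: "{X\<in>W1. X \<subseteq> D \<or> D \<subseteq> X} = {D}"
  proof
    show "{X\<in>W1. X \<subseteq> D \<or> D \<subseteq> X} \<subseteq> {D}"
    proof
      fix X assume "X \<in> {X\<in>W1. X \<subseteq> D \<or> D \<subseteq> X}"
      hence X: "X \<subseteq> P" "card X = k" "X \<subseteq> D \<or> D \<subseteq> X" unfolding W1_def by auto
      have finX: "finite X" by (rule finite_subset[OF X(1) finP])
      have "X = D" using X(3)
      proof
        assume s: "X \<subseteq> D"
        have "card X = card D" using X(2) cD by simp
        thus "X = D" by (rule card_subset_eq[OF finD s])
      next
        assume s: "D \<subseteq> X"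
        have "card D = card X" using X(2) cD by simp
        thus "X = D" using card_subset_eq[OF finX s] by simp
      qed
      thus "X \<in> {D}" by simp
    qed
    show "{D} \<subseteq> {X\<in>W1. X \<subseteq> D \<or> D \<subseteq> X}" using DP cD unfolding W1_def by blast
  qed
  have "deg Y = card {X\<in>W1. X \<subseteq> D \<or> D \<subseteq> X}" unfolding deg_def W2_nb[OF Y] D_def ..
  also have "\<dots> = 1" unfolding eq by simp
  finally show ?thesis .
qed

lemma cnt_phi_r: assumes r: "1 \<le> r"
  shows "card {Y\<in>phi. card Y = r} = 2^(r-1) * (card P choose r)"
proof -
  have e1: "{Y\<in>phi. card Y = r} = {Y\<in>phi. (\<lambda>T. card T = r) (abs ` Y)}"
  proof (rule Collect_cong)
    fix Y show "(Y \<in> phi \<and> card Y = r) = (Y \<in> phi \<and> (\<lambda>T. card T = r) (abs ` Y))"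
      using phi_card[of Y] by auto
  qed
  have e2: "{T. T \<subseteq> P \<and> T \<noteq> {} \<and> card T = r} = {T. T \<subseteq> P \<and> card T = r}"
    using r by auto
  have "card {Y\<in>phi. card Y = r} = (\<Sum>T\<in>{T. T \<subseteq> P \<and> card T = r}. 2^(card T - 1))"
    using count_phi[of "\<lambda>T. card T = r"] e1 e2 by simp
  also have "\<dots> = (\<Sum>T\<in>{T. T \<subseteq> P \<and> card T = r}. 2^(r - 1))" by (rule sum.cong) auto
  also have "\<dots> = 2^(r-1) * (card P choose r)" using n_subsets[OF finP] by simp
  finally show ?thesis .
qed

lemma card_W1: "card W1 = card P choose k"
  unfolding W1_def by (rule n_subsets[OF finP])

lemma cnt_W2_ne: assumes r: "1 \<le> r" "r \<noteq> k"
  shows "card {Y\<in>W2. card Y = r} = 2^(r-1) * (card P choose r)"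
proof -
  have "{Y\<in>W2. card Y = r} = {Y\<in>phi. card Y = r}" using r unfolding W2_def W1_def by auto
  thus ?thesis using cnt_phi_r[OF r(1)] by simp
qed

lemma cnt_W2_eq: "card {Y\<in>W2. card Y = k} = (2^(k-1) - 1) * (card P choose k)"
proof -
  have e: "{Y\<in>W2. card Y = k} = {Y\<in>phi. card Y = k} - W1" unfolding W2_def by blast
  have sub: "W1 \<subseteq> {Y\<in>phi. card Y = k}" using W1_phi unfolding W1_def by blast
  have fin: "finite W1" unfolding W1_def using finP by simp
  have "card {Y\<in>W2. card Y = k} = card {Y\<in>phi. card Y = k} - card W1"
    unfolding e by (rule card_Diff_subset[OF fin sub])
  also have "\<dots> = 2^(k-1) * (card P choose k) - (card P choose k)"
    using cnt_phi_r[OF k1] card_W1 by simp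
  also have "\<dots> = (2^(k-1) - 1) * (card P choose k)" by (simp add: diff_mult_distrib)
  finally show ?thesis .
qed

lemma W2_card_range: "Y \<in> W2 \<Longrightarrow> card Y \<in> {1..card P}"
  using phi_card_le phi_card_ge W2_def by auto

end



theorem mainTheorem10:
  fixes x :: "nat \<Rightarrow> real" and n k :: nat
  assumes n2: "n \<ge> 2" and k1: "1 \<le> k" and kn: "k < n"
    and pos: "\<And>i. 1 \<le> i \<Longrightarrow> i \<le> n \<Longrightarrow> x i > 0"
    and incr: "\<And>i j. 1 \<le> i \<Longrightarrow> i < j \<Longrightarrow> j \<le> n \<Longrightarrow> x i < x j"
  shows
    \<comment> \<open>(i)\<close>
    "(\<forall>X \<in> V1 x n k. HBdeg x n k X = dV1 n k)
     \<and> dV1 n k = (3^k - 3) div 2 + 2^(k-1) * (3^(n-k) - 1)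
     \<and> card (V1 x n k) = n choose k
     \<comment> \<open>(ii)\<close>
     \<and> (\<forall>r. 1 \<le> r \<and> r < k \<longrightarrow>
          (\<forall>Y \<in> V2 x n k. card Y = r \<longrightarrow> HBdeg x n k Y = (n - r) choose (k - r))
          \<and> card {Y \<in> V2 x n k. card Y = r} = 2^(r-1) * (n choose r))
     \<comment> \<open>(iii)\<close>
     \<and> (\<forall>Y \<in> V2 x n k. card Y = k \<longrightarrow> HBdeg x n k Y = 1)
     \<and> card {Y \<in> V2 x n k. card Y = k} = (2^(k-1) - 1) * (n choose k)
     \<comment> \<open>(iv)\<close>
     \<and> (\<forall>r. k < r \<and> r \<le> n \<longrightarrow>
          (\<forall>Y \<in> V2 x n k. card Y = r \<longrightarrow> HBdeg x n k Y = r choose k)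
          \<and> card {Y \<in> V2 x n k. card Y = r} = 2^(r-1) * (n choose r))
     \<comment> \<open>degree sequence, as a multiset of degrees (i.e. up to the non-increasing arrangement)\<close>
     \<and> image_mset (HBdeg x n k) (mset_set (HBverts x n k))
         = replicate_mset (n choose k) (dV1 n k)
           + (\<Sum>r\<in>{1..<k}. replicate_mset (2^(r-1) * (n choose r)) ((n - r) choose (k - r)))
           + replicate_mset ((2^(k-1) - 1) * (n choose k)) 1
           + (\<Sum>r\<in>{k<..n}. replicate_mset (2^(r-1) * (n choose r)) (r choose k))"
proof -
  define P where "P = Bpos x n"
  have hP: "P = x ` {1..n}" unfolding P_def Bpos_def by auto
  have injx: "inj_on x {1..n}"
  proof (rule inj_onI)
    fix i j assume i: "i \<in> {1..n}" and j: "j \<in> {1..n}" and e: "x i = x j"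
    show "i = j"
    proof (rule ccontr)
      assume "i \<noteq> j"
      hence "i < j \<or> j < i" by arith
      thus False
      proof
        assume "i < j" hence "x i < x j" using incr i j by simp
        thus False using e by simp
      next
        assume "j < i" hence "x j < x i" using incr i j by simp
        thus False using e by simp
      qed
    qed
  qed
  have finP: "finite P" unfolding hP by simp
  have cardP: "card P = n" unfolding hP using card_image[OF injx] by simp
  have posP: "p > 0" if p: "p \<in> P" for p
  proof -
    obtain i where "i \<in> {1..n}" "p = x i" using p unfolding hP by blast
    thus ?thesis using pos by simp
  qed
  have xnP: "x n \<in> P" unfolding hP using n2 by simp
  have MaxP: "Max P = x n"
  proof (rule Max_eqI[OF finP _ xnP])
    fix y assume "y \<in> P"
    then obtain i where i: "i \<in> {1..n}" "y = x i" unfolding hP by blast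
    show "y \<le> x n"
    proof (cases "i = n")
      case True thus ?thesis using i by simp
    next
      case False hence "i < n" using i by simp
      thus ?thesis using incr[of i n] i by simp
    qed
  qed
  have Pdiff: "P - {Max P} = x ` {1..<n}"
  proof
    show "P - {Max P} \<subseteq> x ` {1..<n}"
    proof
      fix y assume y: "y \<in> P - {Max P}"
      hence "y \<in> P" "y \<noteq> x n" using MaxP by auto
      then obtain i where i: "i \<in> {1..n}" "y = x i" "x i \<noteq> x n" unfolding hP by blast
      hence "i \<noteq> n" by blast
      thus "y \<in> x ` {1..<n}" using i by simp
    qed
    show "x ` {1..<n} \<subseteq> P - {Max P}"
    proof
      fix y assume "y \<in> x ` {1..<n}"
      then obtain i where i: "i \<in> {1..<n}" "y = x i" by blast
      have "x i < x n" using incr[of i n] i by simp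
      hence "y \<noteq> Max P" using i MaxP by simp
      moreover have "y \<in> P" unfolding hP using i by simp
      ultimately show "y \<in> P - {Max P}" by blast
    qed
  qed
  have Bs: "Bset x n = P \<union> uminus ` (P - {Max P})"
    unfolding Pdiff unfolding Bset_def hP by auto
  interpret kb2 P k
  proof
    show "finite P" by (rule finP)
    show "\<And>p. p \<in> P \<Longrightarrow> 0 < p" by (rule posP)
    show "1 \<le> k" by (rule k1)
    show "k < card P" using kn cardP by simp
  qed
  have phiE: "phiB x n = phi" unfolding phiB_def phi_def Bs by (simp add: P_def)
  have V1E: "V1 x n k = W1" unfolding V1_def W1_def by (simp add: P_def)
  have V2E: "V2 x n k = W2" unfolding V2_def W2_def V1E phiE ..
  have HVE: "HBverts x n k = W1 \<union> W2" unfolding HBverts_def V1E V2E ..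
  have adjE: "HBadj x n k = adj"
    by (intro ext) (simp only: HBadj_def adj_def V1E V2E dagger_def)
  have degE: "HBdeg x n k = deg"
    by (intro ext) (simp only: HBdeg_def deg_def HVE adjE)
  have p1: "\<forall>X \<in> V1 x n k. HBdeg x n k X = dV1 n k"
    unfolding V1E degE using deg_W1 cardP by simp
  have p2: "dV1 n k = (3^k - 3) div 2 + 2^(k-1) * (3^(n-k) - 1)"
    by (rule dV1_closed[OF assms(2) assms(3)])
  have p3: "card (V1 x n k) = n choose k" unfolding V1E using card_W1 cardP by simp
  have p4: "\<forall>r. 1 \<le> r \<and> r < k \<longrightarrow>
          (\<forall>Y \<in> V2 x n k. card Y = r \<longrightarrow> HBdeg x n k Y = (n - r) choose (k - r))
          \<and> card {Y \<in> V2 x n k. card Y = r} = 2^(r-1) * (n choose r)"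
    unfolding V2E degE using deg_small cnt_W2_ne cardP by auto
  have p5: "\<forall>Y \<in> V2 x n k. card Y = k \<longrightarrow> HBdeg x n k Y = 1"
    unfolding V2E degE using deg_eq by auto
  have p6: "card {Y \<in> V2 x n k. card Y = k} = (2^(k-1) - 1) * (n choose k)"
    unfolding V2E using cnt_W2_eq cardP by simp
  have p7: "\<forall>r. k < r \<and> r \<le> n \<longrightarrow>
          (\<forall>Y \<in> V2 x n k. card Y = r \<longrightarrow> HBdeg x n k Y = r choose k)
          \<and> card {Y \<in> V2 x n k. card Y = r} = 2^(r-1) * (n choose r)"
  proof (intro allI impI conjI ballI)
    fix r Y assume r: "k < r \<and> r \<le> n" and Y: "Y \<in> V2 x n k" "card Y = r"
    show "HBdeg x n k Y = r choose k" using deg_big Y r unfolding V2E degE by blast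
  next
    fix r assume r: "k < r \<and> r \<le> n"
    have "1 \<le> r" "r \<noteq> k" using r k1 by auto
    thus "card {Y \<in> V2 x n k. card Y = r} = 2^(r-1) * (n choose r)"
      unfolding V2E using cnt_W2_ne cardP by simp
  qed
  define A where "A r = {Y\<in>W2. card Y = r}" for r
  define c where "c r = (if r < k then (n - r) choose (k - r) else if r = k then 1 else r choose k)" for r
  have finW1: "finite W1" using W1_phi phi_finite finite_subset by blast
  have finW2: "finite W2" using phi_finite unfolding W2_def by simp
  have dW: "W1 \<inter> W2 = {}" unfolding W2_def by blast
  have W2U: "W2 = (\<Union>r\<in>{1..n}. A r)" unfolding A_def using W2_card_range cardP by auto
  have m1: "image_mset deg (mset_set W1) = replicate_mset (n choose k) (dV1 n k)"
  proof -
    have "image_mset deg (mset_set W1) = image_mset (\<lambda>_. dV1 n k) (mset_set W1)"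
      by (rule image_mset_cong) (use finW1 deg_W1 cardP in auto)
    also have "\<dots> = replicate_mset (card W1) (dV1 n k)" by (simp add: image_mset_const_eq)
    finally show ?thesis using card_W1 cardP by simp
  qed
  have m2: "image_mset deg (mset_set W2) = (\<Sum>r\<in>{1..n}. replicate_mset (card (A r)) (c r))"
    unfolding W2U
  proof (rule mset_part)
    show "finite {1..n}" by simp
    show "\<forall>i\<in>{1..n}. finite (A i)" unfolding A_def using finW2 by simp
    show "\<forall>i\<in>{1..n}. \<forall>j\<in>{1..n}. i \<noteq> j \<longrightarrow> A i \<inter> A j = {}" unfolding A_def by blast
    show "\<forall>i\<in>{1..n}. \<forall>a\<in>A i. deg a = c i"
    proof (intro ballI)
      fix i a assume i: "i \<in> {1..n}" and a: "a \<in> A i"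
      hence aW: "a \<in> W2" and ca: "card a = i" unfolding A_def by auto
      show "deg a = c i"
      proof (cases "i < k")
        case True thus ?thesis using deg_small[OF aW ca True] cardP c_def by simp
      next
        case False
        show ?thesis
        proof (cases "i = k")
          case True thus ?thesis using deg_eq[OF aW] ca c_def by simp
        next
          case False2: False
          hence "k < i" using False by simp
          thus ?thesis using deg_big[OF aW ca] c_def False False2 by simp
        qed
      qed
    qed
  qed
  have split: "{1..n} = {1..<k} \<union> insert k {k<..n}" using assms(2,3) by auto
  have sumsplit: "(\<Sum>r\<in>{1..n}. replicate_mset (card (A r)) (c r))
     = (\<Sum>r\<in>{1..<k}. replicate_mset (card (A r)) (c r))
       + (replicate_mset (card (A k)) (c k) + (\<Sum>r\<in>{k<..n}. replicate_mset (card (A r)) (c r)))"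
    unfolding split by (subst sum.union_disjoint) auto
  have q1: "(\<Sum>r\<in>{1..<k}. replicate_mset (card (A r)) (c r))
      = (\<Sum>r\<in>{1..<k}. replicate_mset (2^(r-1) * (n choose r)) ((n - r) choose (k - r)))"
  proof (rule sum.cong[OF refl])
    fix r assume r: "r \<in> {1..<k}"
    have "card (A r) = 2^(r-1) * (n choose r)" unfolding A_def using cnt_W2_ne[of r] r cardP by simp
    moreover have "c r = (n - r) choose (k - r)" using r c_def by simp
    ultimately show "replicate_mset (card (A r)) (c r) = replicate_mset (2^(r-1) * (n choose r)) ((n - r) choose (k - r))" by simp
  qed
  have q3: "(\<Sum>r\<in>{k<..n}. replicate_mset (card (A r)) (c r))
      = (\<Sum>r\<in>{k<..n}. replicate_mset (2^(r-1) * (n choose r)) (r choose k))"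
  proof (rule sum.cong[OF refl])
    fix r assume r: "r \<in> {k<..n}"
    have "card (A r) = 2^(r-1) * (n choose r)" unfolding A_def using cnt_W2_ne[of r] r k1 cardP by simp
    moreover have "c r = r choose k" using r c_def by simp
    ultimately show "replicate_mset (card (A r)) (c r) = replicate_mset (2^(r-1) * (n choose r)) (r choose k)" by simp
  qed
  have q2: "replicate_mset (card (A k)) (c k) = replicate_mset ((2^(k-1) - 1) * (n choose k)) 1"
    unfolding A_def c_def using cnt_W2_eq cardP by simp
  have p8: "image_mset (HBdeg x n k) (mset_set (HBverts x n k))
         = replicate_mset (n choose k) (dV1 n k)
           + (\<Sum>r\<in>{1..<k}. replicate_mset (2^(r-1) * (n choose r)) ((n - r) choose (k - r)))
           + replicate_mset ((2^(k-1) - 1) * (n choose k)) 1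
           + (\<Sum>r\<in>{k<..n}. replicate_mset (2^(r-1) * (n choose r)) (r choose k))"
  proof -
    have "image_mset (HBdeg x n k) (mset_set (HBverts x n k))
        = image_mset deg (mset_set W1) + image_mset deg (mset_set W2)"
      unfolding degE HVE mset_set_Union[OF finW1 finW2 dW] by simp
    also have "\<dots> = replicate_mset (n choose k) (dV1 n k)
           + ((\<Sum>r\<in>{1..<k}. replicate_mset (2^(r-1) * (n choose r)) ((n - r) choose (k - r)))
           + (replicate_mset ((2^(k-1) - 1) * (n choose k)) 1
           + (\<Sum>r\<in>{k<..n}. replicate_mset (2^(r-1) * (n choose r)) (r choose k))))"
      unfolding m1 m2 sumsplit q1 q2 q3 ..
    finally show ?thesis by (simp add: add.assoc)
  qed
  show ?thesis using p1 p2 p3 p4 p5 p6 p7 p8 by blast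
qed


end
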